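(* If the transition dynamics are deterministic, the policy that maximizes expected return is the policy that minimizes the time-step metric, i.e. $\pi^* = \pi^{\min}$, where $\pi^{\min}$ denotes the policy attaining the minimum time-step distance $d^{\min}_T(s, s_g)$ to the goal.
   Context: Consider a goal-conditioned MDP $\langle \mathcal{S}, \mathcal{A}, \mathcal{G}, P, \rho_0, \sigma, \gamma \rangle$ with discrete state space $\mathcal{S}$, discrete action space $\mathcal{A}$, goal set $\mathcal{G} \subseteq \mathcal{S}$, goal-conditioned transition dynamics $P(\cdot|s,a,s_g)$, start distribution $\rho_0$, goal distribution $\sigma$, and discount $\gamma \in [0,1)$. The reward is $r(s_t,a_t,s_{t+1}|s_g) = \mathbb{I}[s_{t+1}=s_g]$, and on reaching the goal the agent transitions to an absorbing state with zero reward thereafter (the episode terminates). Policies are $\pi(\cdot|s,s_g)$, and $\pi^*$ maximizes expected discounted return $\mathbb{E}[\sum_t \gamma^t r(s_t,a_t,s_{t+1}|s_g)]$. The time-step metric is $d^\pi_T(s, s_g) = \mathbb{E}[T(s_g|\pi, s)]$, where $T(s_g|\pi,s)$ is the random first time-step at which $s_g$ is reached starting from $s$ under $\pi$. The minimum time-step distance $d^{\min}_T$ satisfies the Bellman optimality condition $d^{\min}_T(s,s_g)=0$ if $s=s_g$ and $d^{\min}_T(s,s_g) = 1 + \min_{a} \sum_{s'} P(s'|s,a,s_g)\, d^{\min}_T(s',s_g)$ otherwise; $\pi^{\min}$ is the corresponding policy. The value under this reward is $V^\pi(s|s_g) = \mathbb{E}[\gamma^{T(s_g|\pi,s)}]$.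 *)

theory Defs
  imports "HOL-Probability.Probability"
begin

text \<open>Transition dynamics: P s a g is the distribution of the next state given
  state s, action a and goal g.  A policy pol s g is a distribution over actions.\<close>

type_synonym ('s,'a) dynamics = "'s \<Rightarrow> 'a \<Rightarrow> 's \<Rightarrow> 's pmf"
type_synonym ('s,'a) policy = "'s \<Rightarrow> 's \<Rightarrow> 'a pmf"

definition deterministic_dynamics :: "('s,'a) dynamics \<Rightarrow> bool" where
  "deterministic_dynamics P \<longleftrightarrow> (\<forall>s a g. \<exists>s'. P s a g = return_pmf s')"

text \<open>hit_prob P pol g n s = Pr[T(g | pol, s) = n]: probability that the first time-step
  at which goal g is reached, starting from s under pol, equals n.  Reaching the goal
  terminates the episode (absorbing state).\<close>
fun hit_prob :: "('s,'a) dynamics \<Rightarrow> ('s,'a) policy \<Rightarrow> 's \<Rightarrow> nat \<Rightarrow> 's \<Rightarrow> ennreal" where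
  "hit_prob P pol g 0 s = (if s = g then 1 else 0)"
| "hit_prob P pol g (Suc n) s =
     (if s = g then 0
      else \<integral>\<^sup>+ a. (\<integral>\<^sup>+ s'. hit_prob P pol g n s' \<partial>measure_pmf (P s a g)) \<partial>measure_pmf (pol s g))"

text \<open>Value V^pol(s | g) = E[gamma ^ T], with gamma^infinity = 0.\<close>
definition value_fn :: "('s,'a) dynamics \<Rightarrow> real \<Rightarrow> ('s,'a) policy \<Rightarrow> 's \<Rightarrow> 's \<Rightarrow> ennreal" where
  "value_fn P \<gamma> pol s g = (\<Sum>n. ennreal (\<gamma> ^ n) * hit_prob P pol g n s)"

text \<open>Time-step metric d_T^pol(s, g) = E[T(g | pol, s)], where T = infinity
  (never reaching the goal) contributes infinity with its probability.\<close>
definition time_step_metric :: "('s,'a) dynamics \<Rightarrow> ('s,'a) policy \<Rightarrow> 's \<Rightarrow> 's \<Rightarrow> ennreal" where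
  "time_step_metric P pol s g =
     (\<Sum>n. of_nat n * hit_prob P pol g n s) + \<infinity> * (1 - (\<Sum>n. hit_prob P pol g n s))"

definition d_min :: "('s,'a) dynamics \<Rightarrow> 's \<Rightarrow> 's \<Rightarrow> ennreal" where
  "d_min P s g = (INF pol. time_step_metric P pol s g)"

definition optimal_policy :: "('s,'a) dynamics \<Rightarrow> real \<Rightarrow> 's set \<Rightarrow> ('s,'a) policy \<Rightarrow> bool" where
  "optimal_policy P \<gamma> G pol \<longleftrightarrow>
     (\<forall>pol'. \<forall>s. \<forall>g\<in>G. value_fn P \<gamma> pol' s g \<le> value_fn P \<gamma> pol s g)"

definition min_time_policy :: "('s,'a) dynamics \<Rightarrow> 's set \<Rightarrow> ('s,'a) policy \<Rightarrow> bool" where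
  "min_time_policy P G pol \<longleftrightarrow> (\<forall>s. \<forall>g\<in>G. time_step_metric P pol s g = d_min P s g)"

end

theory Submission imports Defs begin



lemma single_mass:
  fixes h :: "nat \<Rightarrow> ennreal"
  assumes S: "suminf h \<le> 1" and hd: "h d = 1" and nd: "n \<noteq> d"
  shows "h n = 0"
proof -
  have "sum h {d, n} \<le> suminf h" by (rule sum_le_suminf) auto
  then have "1 + h n \<le> suminf h" using hd nd by simp
  then have "1 + h n \<le> 1" using S by (rule order_trans)
  then have "1 + h n \<le> 1 + 0" by simp
  then have "h n \<le> 0" by (subst (asm) ennreal_add_left_cancel_le) simp
  then show ?thesis by simp
qed

lemma single_sum:
  fixes f :: "nat \<Rightarrow> ennreal"
  assumes "\<And>n. n \<noteq> d \<Longrightarrow> f n = 0"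
  shows "suminf f = f d"
proof -
  have "f = (\<lambda>n. if n = d then f n else 0)" using assms by auto
  then show ?thesis using sums_single[of d f] sums_unique by metis
qed

lemma V_le:
  fixes h :: "nat \<Rightarrow> ennreal" and \<gamma> :: real
  assumes z: "\<And>n. n < d \<Longrightarrow> h n = 0" and S: "suminf h \<le> 1" and g0: "0 < \<gamma>" and g1: "\<gamma> < 1"
  shows "(\<Sum>n. ennreal (\<gamma> ^ n) * h n) \<le> ennreal (\<gamma> ^ d)"
proof -
  have "(\<Sum>n. ennreal (\<gamma> ^ n) * h n) \<le> (\<Sum>n. ennreal (\<gamma> ^ d) * h n)"
  proof (rule suminf_le)
    fix n show "ennreal (\<gamma> ^ n) * h n \<le> ennreal (\<gamma> ^ d) * h n"
    proof (cases "n < d")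
      case True then show ?thesis using z by simp
    next
      case False
      then have "\<gamma> ^ n \<le> \<gamma> ^ d" using g0 g1 by (intro power_decreasing) auto
      then show ?thesis by (intro mult_right_mono ennreal_leI) auto
    qed
  qed auto
  also have "\<dots> = ennreal (\<gamma> ^ d) * suminf h" by (rule ennreal_suminf_cmult)
  also have "\<dots> \<le> ennreal (\<gamma> ^ d)" using S mult_left_mono[OF S, of "ennreal (\<gamma> ^ d)"] by simp
  finally show ?thesis .
qed

lemma V_eq:
  fixes h :: "nat \<Rightarrow> ennreal" and \<gamma> :: real
  assumes z: "\<And>n. n < d \<Longrightarrow> h n = 0" and S: "suminf h \<le> 1" and g0: "0 < \<gamma>" and g1: "\<gamma> < 1"
  shows "(\<Sum>n. ennreal (\<gamma> ^ n) * h n) = ennreal (\<gamma> ^ d) \<longleftrightarrow> h d = 1"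
proof
  assume hd: "h d = 1"
  have "(\<Sum>n. ennreal (\<gamma> ^ n) * h n) = ennreal (\<gamma> ^ d) * h d"
    by (rule single_sum[where f="\<lambda>n. ennreal (\<gamma> ^ n) * h n", simplified])
       (use single_mass[OF S hd] in auto)
  then show "(\<Sum>n. ennreal (\<gamma> ^ n) * h n) = ennreal (\<gamma> ^ d)" using hd by simp
next
  assume V: "(\<Sum>n. ennreal (\<gamma> ^ n) * h n) = ennreal (\<gamma> ^ d)"
  define c where "c = \<gamma> ^ d - \<gamma> ^ Suc d"
  have c0: "c > 0" unfolding c_def using g0 g1 by simp
  have hle: "h d \<le> 1" using S sum_le_suminf[of h "{d}"] by auto
  then obtain x where x: "h d = ennreal x" "0 \<le> x" "x \<le> 1"
    by (metis ennreal_le_1 ennreal_cases ennreal_one_neq_top top.extremum_uniqueI)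
  have "(\<Sum>n. ennreal (\<gamma> ^ n) * h n) \<le>
        (\<Sum>n. ennreal (\<gamma> ^ Suc d) * h n + (if n = d then ennreal c * h n else 0))"
  proof (rule suminf_le)
    fix n show "ennreal (\<gamma> ^ n) * h n \<le> ennreal (\<gamma> ^ Suc d) * h n + (if n = d then ennreal c * h n else 0)"
    proof (cases "n < d")
      case True then show ?thesis using z by simp
    next
      case False
      show ?thesis
      proof (cases "n = d")
        case True
        have "ennreal (\<gamma> ^ Suc d) + ennreal c = ennreal (\<gamma> ^ d)"
          using g0 c0 by (subst ennreal_plus[symmetric]) (auto simp: c_def)
        then show ?thesis using True by (simp add: distrib_right[symmetric])
      next
        case False
        with \<open>\<not> n < d\<close> have "Suc d \<le> n" by simp
        then have "\<gamma> ^ n \<le> \<gamma> ^ Suc d" using g0 g1 by (intro power_decreasing) auto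
        then show ?thesis using False by (auto intro!: mult_right_mono ennreal_leI)
      qed
    qed
  qed auto
  also have "\<dots> = (\<Sum>n. ennreal (\<gamma> ^ Suc d) * h n) + (\<Sum>n. (if n = d then ennreal c * h n else 0))"
    by (rule suminf_add[symmetric]) auto
  also have "\<dots> = ennreal (\<gamma> ^ Suc d) * suminf h + ennreal c * h d"
    by (simp add: ennreal_suminf_cmult sums_unique[OF sums_single, symmetric])
  also have "\<dots> \<le> ennreal (\<gamma> ^ Suc d) + ennreal c * h d"
    using mult_left_mono[OF S, of "ennreal (\<gamma> ^ Suc d)"] by (auto intro: add_right_mono)
  also have "\<dots> = ennreal (\<gamma> ^ Suc d + c * x)"
    using x g0 c0 by (simp add: ennreal_mult ennreal_plus)
  finally have "ennreal (\<gamma> ^ d) \<le> ennreal (\<gamma> ^ Suc d + c * x)" using V by simp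
  then have "\<gamma> ^ d \<le> \<gamma> ^ Suc d + c * x"
    using g0 c0 x by (subst (asm) ennreal_le_iff) auto
  then have "c * 1 \<le> c * x" unfolding c_def by (simp add: algebra_simps)
  then have "x \<ge> 1" using c0 by simp
  then show "h d = 1" using x by simp
qed

lemma M_ge:
  fixes h :: "nat \<Rightarrow> ennreal"
  assumes z: "\<And>n. n < d \<Longrightarrow> h n = 0" and S: "suminf h \<le> 1"
  shows "of_nat d \<le> (\<Sum>n. of_nat n * h n) + \<infinity> * (1 - suminf h)"
proof (cases "suminf h < 1")
  case True
  then have "1 - suminf h \<noteq> 0" by (simp add: diff_eq_0_iff_ennreal)
  then show ?thesis by (simp add: ennreal_top_mult)
next
  case False
  then have S1: "suminf h = 1" using S by simp
  have "of_nat d = (\<Sum>n. of_nat d * h n)" by (simp add: ennreal_suminf_cmult S1)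
  also have "\<dots> \<le> (\<Sum>n. of_nat n * h n)"
  proof (rule suminf_le)
    fix n show "(of_nat d :: ennreal) * h n \<le> of_nat n * h n"
      using z[of n] by (cases "n < d") (auto intro!: mult_right_mono)
  qed auto
  finally show ?thesis by (simp add: S1)
qed

lemma M_eq:
  fixes h :: "nat \<Rightarrow> ennreal"
  assumes z: "\<And>n. n < d \<Longrightarrow> h n = 0" and S: "suminf h \<le> 1"
  shows "(\<Sum>n. of_nat n * h n) + \<infinity> * (1 - suminf h) = of_nat d \<longleftrightarrow> h d = 1"
proof
  assume hd: "h d = 1"
  have o: "\<And>n. n \<noteq> d \<Longrightarrow> h n = 0" using single_mass[OF S hd] by auto
  have "suminf h = 1" using single_sum[of d h] o hd by auto
  moreover have "(\<Sum>n. of_nat n * h n) = (of_nat d :: ennreal)"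
    using single_sum[of d "\<lambda>n. of_nat n * h n"] o hd by auto
  ultimately show "(\<Sum>n. of_nat n * h n) + \<infinity> * (1 - suminf h) = of_nat d" by simp
next
  assume M: "(\<Sum>n. of_nat n * h n) + \<infinity> * (1 - suminf h) = of_nat d"
  have S1: "suminf h = 1"
  proof (rule ccontr)
    assume "suminf h \<noteq> 1"
    then have "suminf h < 1" using S by simp
    then have "1 - suminf h \<noteq> 0" by (simp add: diff_eq_0_iff_ennreal)
    then show False using M by (simp add: ennreal_top_mult)
  qed
  then have M': "(\<Sum>n. of_nat n * h n) = (of_nat d :: ennreal)" using M by simp
  have "(\<Sum>n. of_nat d * h n + (if n = d then 0 else h n)) \<le> (\<Sum>n. of_nat n * h n)"
  proof (rule suminf_le)
    fix n show "(of_nat d :: ennreal) * h n + (if n = d then 0 else h n) \<le> of_nat n * h n"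
    proof (cases "n < d")
      case True then show ?thesis using z by simp
    next
      case False
      show ?thesis
      proof (cases "n = d")
        case False
        with \<open>\<not> n < d\<close> have "Suc d \<le> n" by simp
        then have "(of_nat d :: ennreal) * h n + h n = of_nat (Suc d) * h n"
          by (simp add: distrib_right)
        also have "\<dots> \<le> of_nat n * h n" using \<open>Suc d \<le> n\<close> by (intro mult_right_mono of_nat_mono) auto
        finally show ?thesis using False by simp
      qed simp
    qed
  qed auto
  moreover have "(\<Sum>n. of_nat d * h n + (if n = d then 0 else h n)) =
     (\<Sum>n. of_nat d * h n) + (\<Sum>n. (if n = d then 0 else h n))"
    by (rule suminf_add[symmetric]) auto
  ultimately have "of_nat d + (\<Sum>n. (if n = d then 0 else h n)) \<le> (of_nat d :: ennreal)"
    using M' S1 by (simp add: ennreal_suminf_cmult)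
  then have "of_nat d + (\<Sum>n. (if n = d then 0 else h n)) \<le> (of_nat d :: ennreal) + 0" by simp
  then have "(\<Sum>n. (if n = d then 0 else h n)) \<le> 0"
    by (subst (asm) ennreal_add_left_cancel_le) simp
  then have "(\<Sum>n. (if n = d then 0 else h n)) = 0" by simp
  then have "\<forall>n. (if n = d then 0 else h n) = 0" by (subst (asm) suminf_eq_zero_iff) auto
  then have "\<And>n. n \<noteq> d \<Longrightarrow> h n = 0" by (metis)
  then have "suminf h = h d" by (rule single_sum)
  then show "h d = 1" using S1 by simp
qed




definition succ :: "('s,'a) dynamics \<Rightarrow> 's \<Rightarrow> 's \<Rightarrow> 'a \<Rightarrow> 's" where
  "succ P g s a = (SOME s'. P s a g = return_pmf s')"

lemma succ_eq: "deterministic_dynamics P \<Longrightarrow> P s a g = return_pmf (succ P g s a)"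
  unfolding succ_def deterministic_dynamics_def by (rule someI_ex) blast

fun reach :: "('s,'a) dynamics \<Rightarrow> 's \<Rightarrow> nat \<Rightarrow> 's set" where
  "reach P g 0 = {g}"
| "reach P g (Suc n) = insert g {s. \<exists>a. succ P g s a \<in> reach P g n}"

lemma g_reach: "g \<in> reach P g n"
  by (cases n) auto

lemma hit_det:
  assumes "deterministic_dynamics P"
  shows "hit_prob P pol g (Suc n) s =
    (if s = g then 0 else \<integral>\<^sup>+ a. hit_prob P pol g n (succ P g s a) \<partial>measure_pmf (pol s g))"
  by (simp add: succ_eq[OF assms] nn_integral_return_pmf)

lemma hit_nz_reach:
  assumes "deterministic_dynamics P"
  shows "hit_prob P pol g n s \<noteq> 0 \<Longrightarrow> s \<in> reach P g n"
proof (induction n arbitrary: s)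
  case 0 then show ?case by (auto split: if_splits)
next
  case (Suc n)
  show ?case
  proof (cases "s = g")
    case True then show ?thesis using g_reach by metis
  next
    case False
    have "\<exists>a. hit_prob P pol g n (succ P g s a) \<noteq> 0"
    proof (rule ccontr)
      assume "\<not> ?thesis"
      then have "hit_prob P pol g (Suc n) s = 0" using False by (simp del: hit_prob.simps(2) add: hit_det[OF assms])
      then show False using Suc.prems by simp
    qed
    then show ?thesis using Suc.IH by auto
  qed
qed

lemma hit_partial_le:
  assumes "deterministic_dynamics P"
  shows "(\<Sum>n<N. hit_prob P pol g n s) \<le> 1"
proof (induction N arbitrary: s)
  case 0 then show ?case by simp
next
  case (Suc N)
  have eq: "(\<Sum>n<Suc N. hit_prob P pol g n s) = hit_prob P pol g 0 s + (\<Sum>n<N. hit_prob P pol g (Suc n) s)"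
    by (rule sum.lessThan_Suc_shift)
  show ?case
  proof (cases "s = g")
    case True then show ?thesis unfolding eq by (simp del: hit_prob.simps(2) add: hit_det[OF assms])
  next
    case False
    have "(\<Sum>n<N. hit_prob P pol g (Suc n) s) = (\<Sum>n<N. \<integral>\<^sup>+ a. hit_prob P pol g n (succ P g s a) \<partial>measure_pmf (pol s g))"
      using False by (simp del: hit_prob.simps(2) add: hit_det[OF assms])
    also have "\<dots> = \<integral>\<^sup>+ a. (\<Sum>n<N. hit_prob P pol g n (succ P g s a)) \<partial>measure_pmf (pol s g)"
      by (rule nn_integral_sum[symmetric]) simp
    also have "\<dots> \<le> \<integral>\<^sup>+ a. 1 \<partial>measure_pmf (pol s g)"
      by (rule nn_integral_mono) (rule Suc.IH)
    also have "\<dots> = 1" by simp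
    finally show ?thesis unfolding eq using False by simp
  qed
qed

lemma hit_sum_le:
  assumes "deterministic_dynamics P"
  shows "(\<Sum>n. hit_prob P pol g n s) \<le> 1"
  unfolding suminf_eq_SUP by (rule SUP_least) (rule hit_partial_le[OF assms])

definition dd :: "('s,'a) dynamics \<Rightarrow> 's \<Rightarrow> 's \<Rightarrow> nat" where
  "dd P g s = (LEAST n. s \<in> reach P g n)"

lemma hit_below:
  assumes "deterministic_dynamics P" "n < dd P g s"
  shows "hit_prob P pol g n s = 0"
  using hit_nz_reach[OF assms(1)] not_less_Least[OF assms(2)[unfolded dd_def]] by blast

definition pol0 :: "('s,'a) dynamics \<Rightarrow> ('s,'a) policy" where
  "pol0 P s g = return_pmf (SOME a. succ P g s a \<in> reach P g (dd P g s - 1))"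

lemma pol0_hit:
  assumes det: "deterministic_dynamics P"
  shows "s \<in> reach P g m \<Longrightarrow> hit_prob P (pol0 P) g (dd P g s) s = 1"
proof (induction "dd P g s" arbitrary: s m)
  case 0
  then have "s \<in> reach P g 0" unfolding dd_def by (metis LeastI)
  then show ?case using 0 by simp
next
  case (Suc k)
  have r: "s \<in> reach P g (Suc k)" using Suc.prems Suc.hyps(2) unfolding dd_def by (metis LeastI)
  have nr: "s \<notin> reach P g k" using Suc.hyps(2) unfolding dd_def by (metis lessI not_less_Least)
  then have sg: "s \<noteq> g" using g_reach by metis
  then have ex: "\<exists>a. succ P g s a \<in> reach P g k" using r by simp
  define a0 where "a0 = (SOME a. succ P g s a \<in> reach P g (dd P g s - 1))"
  have a0: "succ P g s a0 \<in> reach P g k" unfolding a0_def using someI_ex[OF ex] Suc.hyps(2)[symmetric]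
    by simp
  define s' where "s' = succ P g s a0"
  have le: "dd P g s' \<le> k" unfolding dd_def using a0 s'_def by (metis Least_le)
  have "dd P g s' = k"
  proof (rule ccontr)
    assume "dd P g s' \<noteq> k"
    then have lt: "Suc (dd P g s') < dd P g s" using le Suc.hyps(2) by simp
    have "s' \<in> reach P g (dd P g s')" unfolding dd_def using a0 s'_def by (metis LeastI)
    then have "s \<in> reach P g (Suc (dd P g s'))" using s'_def by auto
    then show False using lt unfolding dd_def by (metis not_less_Least)
  qed
  then have h: "hit_prob P (pol0 P) g k s' = 1" using Suc.hyps(1) a0 s'_def by blast
  have p0: "pol0 P s g = return_pmf a0" unfolding pol0_def a0_def ..
  show ?case
    unfolding Suc.hyps(2)[symmetric] hit_det[OF det]
    using sg h by (simp del: hit_prob.simps(2) add: p0 s'_def nn_integral_return_pmf)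
qed




lemma pointwise:
  assumes det: "deterministic_dynamics P" and g0: "0 < \<gamma>" and g1: "\<gamma> < 1"
  shows "(\<forall>pol'. value_fn P \<gamma> pol' s g \<le> value_fn P \<gamma> pol s g) \<longleftrightarrow>
         time_step_metric P pol s g = d_min P s g"
proof (cases "\<exists>m. s \<in> reach P g m")
  case True
  then obtain m where m: "s \<in> reach P g m" by blast
  define d where "d = dd P g s"
  have z: "\<And>q n. n < d \<Longrightarrow> hit_prob P q g n s = 0" unfolding d_def using hit_below[OF det] by blast
  have S: "\<And>q. (\<Sum>n. hit_prob P q g n s) \<le> 1" using hit_sum_le[OF det] by blast
  have V: "\<And>q. value_fn P \<gamma> q s g = (\<Sum>n. ennreal (\<gamma> ^ n) * hit_prob P q g n s)"
    unfolding value_fn_def ..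
  have T: "\<And>q. time_step_metric P q s g = (\<Sum>n. of_nat n * hit_prob P q g n s) + \<infinity> * (1 - (\<Sum>n. hit_prob P q g n s))"
    unfolding time_step_metric_def ..
  have Vle: "\<And>q. value_fn P \<gamma> q s g \<le> ennreal (\<gamma> ^ d)"
    unfolding V by (rule V_le[OF z S g0 g1])
  have Veq: "\<And>q. value_fn P \<gamma> q s g = ennreal (\<gamma> ^ d) \<longleftrightarrow> hit_prob P q g d s = 1"
    unfolding V by (rule V_eq[OF z S g0 g1])
  have Tge: "\<And>q. of_nat d \<le> time_step_metric P q s g"
    unfolding T by (rule M_ge[OF z S])
  have Teq: "\<And>q. time_step_metric P q s g = of_nat d \<longleftrightarrow> hit_prob P q g d s = 1"
    unfolding T by (rule M_eq[OF z S])
  have h0: "hit_prob P (pol0 P) g d s = 1" unfolding d_def by (rule pol0_hit[OF det m])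
  have dm: "d_min P s g = of_nat d"
    unfolding d_min_def
  proof (rule antisym)
    show "(INF q. time_step_metric P q s g) \<le> of_nat d"
    proof -
      have "time_step_metric P (pol0 P) s g = of_nat d" using Teq h0 by blast
      then show ?thesis using INF_lower[of "pol0 P" UNIV "\<lambda>q. time_step_metric P q s g"] by simp
    qed
    show "of_nat d \<le> (INF q. time_step_metric P q s g)"
      by (rule INF_greatest) (rule Tge)
  qed
  have "(\<forall>pol'. value_fn P \<gamma> pol' s g \<le> value_fn P \<gamma> pol s g) \<longleftrightarrow> value_fn P \<gamma> pol s g = ennreal (\<gamma> ^ d)"
  proof
    assume "\<forall>pol'. value_fn P \<gamma> pol' s g \<le> value_fn P \<gamma> pol s g"
    then have "value_fn P \<gamma> (pol0 P) s g \<le> value_fn P \<gamma> pol s g" by blast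
    moreover have "value_fn P \<gamma> (pol0 P) s g = ennreal (\<gamma> ^ d)" using Veq h0 by blast
    ultimately show "value_fn P \<gamma> pol s g = ennreal (\<gamma> ^ d)" using Vle[of pol] by simp
  next
    assume "value_fn P \<gamma> pol s g = ennreal (\<gamma> ^ d)"
    then show "\<forall>pol'. value_fn P \<gamma> pol' s g \<le> value_fn P \<gamma> pol s g" using Vle by simp
  qed
  then show ?thesis using Veq Teq dm by simp
next
  case False
  have z: "\<And>q n. hit_prob P q g n s = 0" using hit_nz_reach[OF det] False by blast
  have V: "\<And>q. value_fn P \<gamma> q s g = 0" unfolding value_fn_def z by simp
  have T: "\<And>q. time_step_metric P q s g = \<infinity>" unfolding time_step_metric_def z by simp
  show ?thesis by (simp add: V T d_min_def)
qed

theorem proposition2: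
  fixes P :: "('s,'a) dynamics" and G :: "'s set" and \<gamma> :: real
    and pol :: "('s,'a) policy"
  assumes "deterministic_dynamics P"
    and "0 < \<gamma>" and "\<gamma> < 1"
  shows "optimal_policy P \<gamma> G pol \<longleftrightarrow> min_time_policy P G pol"
  unfolding optimal_policy_def min_time_policy_def
  using pointwise[OF assms] by blast


end
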